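(* Let $A,B,C\in\mathbb{R}^2$ be three vectors of equal (nonzero) length that are not all contained in a closed half-plane bounded by a line through the origin (when their tails are placed at the origin). Then there is an ordering $(v_1,v_2,v_3)$ of $A,B,C$ such that, placed tip-to-tail, the third vector meets the first. Precisely, the segment $[v_1+v_2,\,v_1+v_2+v_3]$ intersects the segment $[0,v_1]$: either the two segments cross, or the three vectors form a closed loop ($v_1+v_2+v_3=0$). *)

theory Defs
  imports "HOL-Analysis.Analysis"
begin

end

theory Submission
  imports Defs
begin

lemma seg_meet:
  fixes v1 v2 v3 :: "real ^ 2"
  assumes "p \<ge> 0" "q \<ge> 0" "m > 0" "p \<le> m" "q \<le> m"
    and eq: "p *\<^sub>R v1 + m *\<^sub>R v2 + q *\<^sub>R v3 = 0"
  shows "closed_segment (v1 + v2) (v1 + v2 + v3) \<inter> closed_segment 0 v1 \<noteq> {}"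
proof -
  define x where "x = v1 + v2 + (q/m) *\<^sub>R v3"
  have "m *\<^sub>R x = m *\<^sub>R v1 + m *\<^sub>R v2 + q *\<^sub>R v3"
    using assms(3) by (simp add: x_def scaleR_add_right)
  also have "\<dots> = (m - p) *\<^sub>R v1" using eq
    by (simp add: algebra_simps)
  finally have mx: "m *\<^sub>R x = (m - p) *\<^sub>R v1" .
  have "x = (1/m) *\<^sub>R (m *\<^sub>R x)" using assms(3) by simp
  hence "x = ((m - p)/m) *\<^sub>R v1" unfolding mx by simp
  hence x2: "x \<in> closed_segment 0 v1"
    using assms unfolding in_segment by (intro conjI exI[of _ "(m-p)/m"]) (auto simp: field_simps)
  have x1: "x \<in> closed_segment (v1 + v2) (v1 + v2 + v3)"
    unfolding in_segment using assms
    by (intro conjI exI[of _ "q/m"]) (simp_all add: x_def scaleR_add_right scaleR_diff_left)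
  show ?thesis using x1 x2 by blast
qed

theorem lemma2p3:
  fixes A B C :: "real ^ 2"
  assumes "A \<noteq> 0" and "norm A = norm B" and "norm B = norm C"
    and "\<not> (\<exists>u :: real ^ 2. u \<noteq> 0 \<and> u \<bullet> A \<ge> 0 \<and> u \<bullet> B \<ge> 0 \<and> u \<bullet> C \<ge> 0)"
  shows "\<exists>v1 v2 v3.
           (v1, v2, v3) \<in> {(A, B, C), (A, C, B), (B, A, C), (B, C, A), (C, A, B), (C, B, A)} \<and>
           closed_segment (v1 + v2) (v1 + v2 + v3) \<inter> closed_segment 0 v1 \<noteq> {}"
proof -
  have B0: "B \<noteq> 0" using assms(1,2) by auto
  have C0: "C \<noteq> 0" using assms(1,2,3) by auto
  define a where "a = B$1 * C$2 - B$2 * C$1"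
  define b where "b = C$1 * A$2 - C$2 * A$1"
  define c where "c = A$1 * B$2 - A$2 * B$1"
  have nz: "vector [- (X$2), X$1] \<noteq> (0::real^2)" if "X \<noteq> 0" for X :: "real^2"
    using that by (auto simp: vec_eq_iff forall_2)
  have ip: "vector [- (X$2), X$1] \<bullet> Y = X$1 * Y$2 - X$2 * Y$1" for X Y :: "real^2"
    by (simp add: inner_vec_def sum_2)
  have ipn: "(- vector [- (X$2), X$1]) \<bullet> Y = -(X$1 * Y$2 - X$2 * Y$1)" for X Y :: "real^2"
    by (simp add: inner_vec_def sum_2)
  have hyp: "\<not> (u \<bullet> A \<ge> 0 \<and> u \<bullet> B \<ge> 0 \<and> u \<bullet> C \<ge> 0)" if "u \<noteq> 0" for u
    using assms(4) that by blast
  have h1: "\<not> (c \<ge> 0 \<and> -b \<ge> 0)" "\<not> (-c \<ge> 0 \<and> b \<ge> 0)"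
  proof -
    have n1: "vector [- (A$2), A$1] \<noteq> (0::real^2)" using nz[OF assms(1)] .
    hence n2: "- vector [- (A$2), A$1] \<noteq> (0::real^2)" by simp
    show "\<not> (c \<ge> 0 \<and> -b \<ge> 0)" using hyp[OF n1] unfolding ip a_def b_def c_def
      by (simp add: mult.commute)
    show "\<not> (-c \<ge> 0 \<and> b \<ge> 0)" using hyp[OF n2] unfolding ipn a_def b_def c_def
      by (simp add: mult.commute)
  qed
  have h2: "\<not> (-c \<ge> 0 \<and> a \<ge> 0)" "\<not> (c \<ge> 0 \<and> -a \<ge> 0)"
  proof -
    have n1: "vector [- (B$2), B$1] \<noteq> (0::real^2)" using nz[OF B0] .
    hence n2: "- vector [- (B$2), B$1] \<noteq> (0::real^2)" by simp
    show "\<not> (-c \<ge> 0 \<and> a \<ge> 0)" using hyp[OF n1] unfolding ip a_def b_def c_def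
      by (simp add: mult.commute)
    show "\<not> (c \<ge> 0 \<and> -a \<ge> 0)" using hyp[OF n2] unfolding ipn a_def b_def c_def
      by (simp add: mult.commute)
  qed
  have h3: "\<not> (b \<ge> 0 \<and> -a \<ge> 0)" "\<not> (-b \<ge> 0 \<and> a \<ge> 0)"
  proof -
    have n1: "vector [- (C$2), C$1] \<noteq> (0::real^2)" using nz[OF C0] .
    hence n2: "- vector [- (C$2), C$1] \<noteq> (0::real^2)" by simp
    show "\<not> (b \<ge> 0 \<and> -a \<ge> 0)" using hyp[OF n1] unfolding ip a_def b_def c_def
      by (simp add: mult.commute)
    show "\<not> (-b \<ge> 0 \<and> a \<ge> 0)" using hyp[OF n2] unfolding ipn a_def b_def c_def
      by (simp add: mult.commute)
  qed
  have sg: "(a > 0 \<and> b > 0 \<and> c > 0) \<or> (a < 0 \<and> b < 0 \<and> c < 0)"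
    using h1 h2 h3 by linarith
  have id: "a *\<^sub>R A + b *\<^sub>R B + c *\<^sub>R C = 0"
    unfolding a_def b_def c_def by (simp add: vec_eq_iff forall_2 algebra_simps)
  obtain p q r where pos: "p > 0" "q > 0" "r > 0" and idp: "p *\<^sub>R A + q *\<^sub>R B + r *\<^sub>R C = 0"
  proof (cases "a > 0")
    case True thus ?thesis using that sg id by auto
  next
    case False
    have "-(a *\<^sub>R A + b *\<^sub>R B + c *\<^sub>R C) = 0" using id by simp
    hence "(-a) *\<^sub>R A + (-b) *\<^sub>R B + (-c) *\<^sub>R C = 0"
      by (simp only: minus_add_distrib scaleR_minus_left)
    thus ?thesis by (rule that[rotated 3]) (use sg False in auto)
  qed
  consider "q \<ge> p" "q \<ge> r" | "p \<ge> q" "p \<ge> r" | "r \<ge> p" "r \<ge> q" by linarith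
  thus ?thesis
  proof cases
    case 1
    have "closed_segment (A + B) (A + B + C) \<inter> closed_segment 0 A \<noteq> {}"
      by (rule seg_meet[of p r q]) (use pos 1 idp in auto)
    thus ?thesis by blast
  next
    case 2
    have "closed_segment (B + A) (B + A + C) \<inter> closed_segment 0 B \<noteq> {}"
      by (rule seg_meet[of q r p]) (use pos 2 in auto, use idp in \<open>simp add: ac_simps\<close>)
    thus ?thesis by blast
  next
    case 3
    have "closed_segment (A + C) (A + C + B) \<inter> closed_segment 0 A \<noteq> {}"
      by (rule seg_meet[of p q r]) (use pos 3 in auto, use idp in \<open>simp add: ac_simps\<close>)
    thus ?thesis by blast
  qed
qed

end
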